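(* Let $\mathcal{M}=(E,\mathcal{I})$ be a matroid whose ground set $E$ is dependent, let $S\subseteq E$ be a dependent set, and let $T\subseteq S$. Then $$q_{S,\mathcal{M}}-q_{S\setminus T,\mathcal{M}}=\Pr_{\pi}\big[C_\pi\subseteq S \text{ and } C_\pi\cap T\neq\emptyset\big]\le p_{T,\mathcal{M}|_S},$$ where $\pi$ is a uniformly random permutation of $E$ on the left and in the middle, while $p_{T,\mathcal{M}|_S}$ is computed with respect to uniformly random permutations of $S$.
   Context: For a matroid $\mathcal{N}$ whose ground set $F$ is dependent and a permutation $\pi$ of $F$, $C_\pi$ denotes the first circuit formed when adding elements in the order of $\pi$: if the first $j$ elements of $\pi$ form an independent set but the first $j+1$ do not, $C_\pi$ is the unique circuit contained in the first $j+1$ elements. For $T\subseteq F$, the hitting probability is $p_{T,\mathcal{N}}=\Pr_\pi[C_\pi\cap T\neq\emptyset]$ and the circuit mass is $q_{T,\mathcal{N}}=\Pr_\pi[C_\pi\subseteq T]$, where $\pi$ is a uniformly random permutation of $F$. $\mathcal{M}|_S$ denotes the restriction of $\mathcal{M}$ to $S$ (independent sets are the independent sets of $\mathcal{M}$ contained in $S$). *)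

theory Defs
  imports Complex_Main "HOL-Combinatorics.Multiset_Permutations"
begin

definition matroid :: "'a set \<Rightarrow> ('a set \<Rightarrow> bool) \<Rightarrow> bool" where
  "matroid E indep \<longleftrightarrow> finite E \<and> (\<forall>X. indep X \<longrightarrow> X \<subseteq> E) \<and> indep {} \<and>
     (\<forall>X Y. indep X \<and> Y \<subseteq> X \<longrightarrow> indep Y) \<and>
     (\<forall>X Y. indep X \<and> indep Y \<and> card X < card Y \<longrightarrow> (\<exists>y\<in>Y - X. indep (insert y X)))"

definition restr :: "('a set \<Rightarrow> bool) \<Rightarrow> 'a set \<Rightarrow> ('a set \<Rightarrow> bool)" where
  "restr indep S = (\<lambda>X. indep X \<and> X \<subseteq> S)"

definition circuit :: "'a set \<Rightarrow> ('a set \<Rightarrow> bool) \<Rightarrow> 'a set \<Rightarrow> bool" where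
  "circuit F indep C \<longleftrightarrow> C \<subseteq> F \<and> \<not> indep C \<and> (\<forall>x\<in>C. indep (C - {x}))"

definition first_circuit :: "'a set \<Rightarrow> ('a set \<Rightarrow> bool) \<Rightarrow> 'a list \<Rightarrow> 'a set" where
  "first_circuit F indep \<pi> =
     (let j = (LEAST j. \<not> indep (set (take (Suc j) \<pi>)))
      in THE C. circuit F indep C \<and> C \<subseteq> set (take (Suc j) \<pi>))"

definition perm_prob :: "'a set \<Rightarrow> ('a list \<Rightarrow> bool) \<Rightarrow> real" where
  "perm_prob F P = real (card {\<pi> \<in> permutations_of_set F. P \<pi>}) / real (card (permutations_of_set F))"

definition hit_prob :: "'a set \<Rightarrow> ('a set \<Rightarrow> bool) \<Rightarrow> 'a set \<Rightarrow> real" where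
  "hit_prob F indep T = perm_prob F (\<lambda>\<pi>. first_circuit F indep \<pi> \<inter> T \<noteq> {})"

definition circ_mass :: "'a set \<Rightarrow> ('a set \<Rightarrow> bool) \<Rightarrow> 'a set \<Rightarrow> real" where
  "circ_mass F indep T = perm_prob F (\<lambda>\<pi>. first_circuit F indep \<pi> \<subseteq> T)"

end

theory Submission
  imports Defs
begin


lemma m_fin: "matroid E indep \<Longrightarrow> finite E" by (simp add: matroid_def)
lemma m_sub: "matroid E indep \<Longrightarrow> indep X \<Longrightarrow> X \<subseteq> E" by (simp add: matroid_def)
lemma m_empty: "matroid E indep \<Longrightarrow> indep {}" by (simp add: matroid_def)
lemma m_her: "matroid E indep \<Longrightarrow> indep X \<Longrightarrow> Y \<subseteq> X \<Longrightarrow> indep Y" by (simp add: matroid_def)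
lemma m_aug: "matroid E indep \<Longrightarrow> indep X \<Longrightarrow> indep Y \<Longrightarrow> card X < card Y \<Longrightarrow> \<exists>y\<in>Y - X. indep (insert y X)"
  by (simp add: matroid_def)
lemma m_finI: "matroid E indep \<Longrightarrow> indep X \<Longrightarrow> finite X"
  using m_fin m_sub finite_subset by metis

lemma augment_to:
  assumes m: "matroid E indep"
  shows "indep X \<Longrightarrow> indep Y \<Longrightarrow> card X \<le> card Y \<Longrightarrow>
     \<exists>Z. indep Z \<and> X \<subseteq> Z \<and> Z \<subseteq> X \<union> Y \<and> card Z = card Y"
proof (induction "card Y - card X" arbitrary: X)
  case 0
  then show ?case by (intro exI[of _ X]) auto
next
  case (Suc n)
  then have "card X < card Y" by simp
  then obtain y where y: "y \<in> Y - X" "indep (insert y X)" using m_aug[OF m Suc.prems(1,2)] by blast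
  have fx: "finite X" using m_finI[OF m Suc.prems(1)] .
  have c: "card (insert y X) = Suc (card X)" using y fx by simp
  have "n = card Y - card (insert y X)" using c Suc.hyps(2) by simp
  moreover have "card (insert y X) \<le> card Y" using c \<open>card X < card Y\<close> by simp
  ultimately obtain Z where "indep Z" "insert y X \<subseteq> Z" "Z \<subseteq> insert y X \<union> Y" "card Z = card Y"
    using Suc.hyps(1) y(2) Suc.prems(2) by blast
  then show ?case using y by (intro exI[of _ Z]) auto
qed

definition circ :: "('a set \<Rightarrow> bool) \<Rightarrow> 'a set \<Rightarrow> bool" where
  "circ indep C \<longleftrightarrow> \<not> indep C \<and> (\<forall>x\<in>C. indep (C - {x}))"

lemma circ_sub_eq:
  assumes m: "matroid E indep" and c1: "circ indep C1" and c2: "circ indep C2" and s: "C1 \<subseteq> C2"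
  shows "C1 = C2"
proof (rule ccontr)
  assume "C1 \<noteq> C2"
  then obtain y where "y \<in> C2" "y \<notin> C1" using s by blast
  then have "C1 \<subseteq> C2 - {y}" using s by blast
  moreover have "indep (C2 - {y})" using c2 \<open>y \<in> C2\<close> by (simp add: circ_def)
  ultimately have "indep C1" using m_her[OF m] by blast
  then show False using c1 by (simp add: circ_def)
qed

lemma circ_unique:
  assumes m: "matroid E indep" and I: "indep I" and c1: "circ indep C1" and c2: "circ indep C2"
    and s1: "C1 \<subseteq> insert x I" and s2: "C2 \<subseteq> insert x I"
  shows "C1 = C2"
proof (cases "C1 \<subseteq> C2")
  case True
  then show ?thesis using circ_sub_eq[OF m c1 c2] by blast
next
  case False
  then obtain e where e: "e \<in> C1" "e \<notin> C2" by blast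
  have fI: "finite I" using m_finI[OF m I] .
  have x2: "x \<in> C2"
  proof (rule ccontr)
    assume "x \<notin> C2"
    then have "C2 \<subseteq> I" using s2 by blast
    then show False using m_her[OF m I] c2 by (auto simp: circ_def)
  qed
  have xI: "x \<notin> I" using c2 s2 m_her[OF m I] by (auto simp: circ_def insert_absorb)
  have ex: "e \<noteq> x" using e x2 by blast
  have eI: "e \<in> I" using e s1 ex by blast
  have i1: "indep (C1 - {e})" using c1 e by (simp add: circ_def)
  have sub1: "C1 - {e} \<subseteq> insert x I - {e}" using s1 by blast
  have cardIx: "card (insert x I - {e}) = card I" using fI xI eI by (simp add: card_Diff_singleton)
  have "card (C1 - {e}) \<le> card I"
    using card_mono[OF _ sub1] cardIx fI by simp
  then obtain Z where Z: "indep Z" "C1 - {e} \<subseteq> Z" "Z \<subseteq> (C1 - {e}) \<union> I" "card Z = card I"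
    using augment_to[OF m i1 I] by blast
  have "e \<notin> Z"
  proof
    assume "e \<in> Z"
    then have "C1 \<subseteq> Z" using Z(2) by blast
    then show False using m_her[OF m Z(1)] c1 by (auto simp: circ_def)
  qed
  then have "Z \<subseteq> insert x I - {e}" using Z(3) s1 by blast
  then have "Z = insert x I - {e}"
    using card_subset_eq[of "insert x I - {e}" Z] fI Z(4) cardIx by simp
  then have "C2 \<subseteq> Z" using s2 e(2) by blast
  then show ?thesis using m_her[OF m Z(1)] c2 by (auto simp: circ_def)
qed

lemma circ_exists:
  assumes m: "matroid E indep"
  shows "X \<subseteq> E \<Longrightarrow> \<not> indep X \<Longrightarrow> \<exists>C\<subseteq>X. circ indep C"
proof (induction "card X" arbitrary: X rule: less_induct)
  case less
  show ?case
  proof (cases "\<forall>x\<in>X. indep (X - {x})")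
    case True
    then show ?thesis using less.prems by (auto simp: circ_def)
  next
    case False
    then obtain x where x: "x \<in> X" "\<not> indep (X - {x})" by blast
    have "finite X" using less.prems(1) m_fin[OF m] finite_subset by blast
    then have "card (X - {x}) < card X" using x(1) by (meson card_Diff1_less)
    then obtain C where "C \<subseteq> X - {x}" "circ indep C" using less.hyps[of "X - {x}"] less.prems x by blast
    then show ?thesis by blast
  qed
qed

lemma circuit_circ: "circuit F indep C \<longleftrightarrow> C \<subseteq> F \<and> circ indep C"
  by (simp add: circuit_def circ_def)

lemma set_take_Suc_sub: "set (take (Suc k) xs) \<subseteq> insert (xs ! k) (set (take k xs))"
proof (cases "k < length xs")
  case True
  then show ?thesis by (simp add: take_Suc_conv_app_nth)
next
  case False
  then show ?thesis by auto
qed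

lemma fc_char:
  assumes m: "matroid F ind" and ik: "ind (set (take k xs))" and nk: "\<not> ind (set (take (Suc k) xs))"
    and C: "circuit F ind C" and Cs: "C \<subseteq> set (take (Suc k) xs)"
  shows "first_circuit F ind xs = C"
proof -
  have L: "(LEAST j. \<not> ind (set (take (Suc j) xs))) = k"
  proof (rule Least_equality)
    show "\<not> ind (set (take (Suc k) xs))" by fact
    fix y assume y: "\<not> ind (set (take (Suc y) xs))"
    show "k \<le> y"
    proof (rule ccontr)
      assume "\<not> k \<le> y"
      then have "set (take (Suc y) xs) \<subseteq> set (take k xs)" by (simp add: set_take_subset_set_take)
      then show False using y m_her[OF m ik] by blast
    qed
  qed
  show ?thesis unfolding first_circuit_def Let_def L
  proof (rule the_equality)
    show "circuit F ind C \<and> C \<subseteq> set (take (Suc k) xs)" using C Cs by blast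
    fix C' assume "circuit F ind C' \<and> C' \<subseteq> set (take (Suc k) xs)"
    then have "C' \<subseteq> insert (xs ! k) (set (take k xs))" "circ ind C'"
      using set_take_Suc_sub[of k xs] by (auto simp: circuit_circ)
    moreover have "C \<subseteq> insert (xs ! k) (set (take k xs))" "circ ind C"
      using C Cs set_take_Suc_sub[of k xs] by (auto simp: circuit_circ)
    ultimately show "C' = C" using circ_unique[OF m ik, of C' C "xs ! k"] by blast
  qed
qed


lemma restr_matroid:
  assumes m: "matroid E indep" and S: "S \<subseteq> E"
  shows "matroid S (restr indep S)"
proof -
  have f: "finite S" using m_fin[OF m] S finite_subset by blast
  have h: "\<And>X Y. indep X \<Longrightarrow> Y \<subseteq> X \<Longrightarrow> indep Y" using m_her[OF m] by blast
  have a: "\<And>X Y. indep X \<Longrightarrow> indep Y \<Longrightarrow> card X < card Y \<Longrightarrow> \<exists>y\<in>Y-X. indep (insert y X)"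
    using m_aug[OF m] by blast
  have a2: "\<And>X Y. indep X \<and> X \<subseteq> S \<Longrightarrow> indep Y \<and> Y \<subseteq> S \<Longrightarrow> card X < card Y \<Longrightarrow>
      \<exists>y\<in>Y-X. indep (insert y X) \<and> insert y X \<subseteq> S"
  proof -
    fix X Y assume "indep X \<and> X \<subseteq> S" "indep Y \<and> Y \<subseteq> S" "card X < card Y"
    then obtain y where "y \<in> Y - X" "indep (insert y X)" using a by blast
    then show "\<exists>y\<in>Y-X. indep (insert y X) \<and> insert y X \<subseteq> S" using \<open>indep Y \<and> Y \<subseteq> S\<close> \<open>indep X \<and> X \<subseteq> S\<close> by blast
  qed
  show ?thesis unfolding matroid_def restr_def using f h a2 m_empty[OF m] by blast
qed
lemma fc_E:
  assumes m: "matroid E indep" and nE: "\<not> indep E" and p: "\<pi> \<in> permutations_of_set E"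
  shows "\<exists>j. j < length \<pi> \<and> indep (set (take j \<pi>)) \<and> circuit E indep (first_circuit E indep \<pi>)
     \<and> first_circuit E indep \<pi> \<subseteq> insert (\<pi> ! j) (set (take j \<pi>)) \<and> \<pi> ! j \<in> first_circuit E indep \<pi>"
proof -
  have sp: "set \<pi> = E" using p by (simp add: permutations_of_set_def)
  define j where "j = (LEAST j. \<not> indep (set (take (Suc j) \<pi>)))"
  have nj: "\<not> indep (set (take (Suc j) \<pi>))"
    unfolding j_def by (rule LeastI[of _ "length \<pi>"]) (simp add: sp nE)
  have ij: "indep (set (take j \<pi>))"
  proof (cases j)
    case 0 then show ?thesis using m_empty[OF m] by simp
  next
    case (Suc i)
    then have "i < j" by simp
    then have "\<not> \<not> indep (set (take (Suc i) \<pi>))" unfolding j_def by (rule not_less_Least)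
    then show ?thesis using Suc by simp
  qed
  have jl: "j < length \<pi>"
  proof (rule ccontr)
    assume "\<not> j < length \<pi>"
    then show False using ij sp nE by simp
  qed
  have sub: "set (take (Suc j) \<pi>) \<subseteq> E" using sp by (meson set_take_subset)
  obtain C where C: "C \<subseteq> set (take (Suc j) \<pi>)" "circ indep C" using circ_exists[OF m sub nj] by blast
  have cC: "circuit E indep C" using C sub by (auto simp: circuit_circ)
  have fc: "first_circuit E indep \<pi> = C" by (rule fc_char[OF m ij nj cC C(1)])
  have Cs: "C \<subseteq> insert (\<pi> ! j) (set (take j \<pi>))" using C(1) set_take_Suc_sub[of j \<pi>] by (rule order_trans)
  have xC: "\<pi> ! j \<in> C"
  proof (rule ccontr)
    assume "\<pi> ! j \<notin> C"
    then have "C \<subseteq> set (take j \<pi>)" using Cs by blast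
    then show False using m_her[OF m ij] C(2) by (auto simp: circ_def)
  qed
  show ?thesis unfolding fc using jl ij cC Cs xC by blast
qed

lemma fc_S:
  assumes m: "matroid E indep" and nE: "\<not> indep E" and p: "\<pi> \<in> permutations_of_set E"
    and S: "S \<subseteq> E" and CS: "first_circuit E indep \<pi> \<subseteq> S"
  shows "first_circuit S (restr indep S) (filter (\<lambda>x. x \<in> S) \<pi>) = first_circuit E indep \<pi>"
proof -
  define C where "C = first_circuit E indep \<pi>"
  obtain j where j: "j < length \<pi>" "indep (set (take j \<pi>))" "circuit E indep C"
     "C \<subseteq> insert (\<pi> ! j) (set (take j \<pi>))" "\<pi> ! j \<in> C"
    using fc_E[OF m nE p] unfolding C_def by blast
  have xS: "\<pi> ! j \<in> S" using j(5) CS C_def by blast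
  define \<sigma> where "\<sigma> = filter (\<lambda>x. x \<in> S) \<pi>"
  define k where "k = length (filter (\<lambda>x. x \<in> S) (take j \<pi>))"
  have "\<pi> = take j \<pi> @ \<pi> ! j # drop (Suc j) \<pi>" using j(1) by (rule id_take_nth_drop)
  then have "\<sigma> = filter (\<lambda>x. x \<in> S) (take j \<pi> @ \<pi> ! j # drop (Suc j) \<pi>)"
    unfolding \<sigma>_def by (rule arg_cong)
  also have "\<dots> = filter (\<lambda>x. x \<in> S) (take j \<pi>) @ \<pi> ! j # filter (\<lambda>x. x \<in> S) (drop (Suc j) \<pi>)"
    using xS by simp
  finally have "\<sigma> = filter (\<lambda>x. x \<in> S) (take j \<pi>) @ \<pi> ! j # filter (\<lambda>x. x \<in> S) (drop (Suc j) \<pi>)" .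
  then have t1: "take k \<sigma> = filter (\<lambda>x. x \<in> S) (take j \<pi>)"
     and t2: "take (Suc k) \<sigma> = filter (\<lambda>x. x \<in> S) (take j \<pi>) @ [\<pi> ! j]"
    unfolding k_def by simp_all
  have mS: "matroid S (restr indep S)" by (rule restr_matroid[OF m S])
  have ik: "restr indep S (set (take k \<sigma>))" unfolding restr_def t1
    using m_her[OF m j(2)] by auto
  have Csub: "C \<subseteq> set (take (Suc k) \<sigma>)" unfolding t2 using j(4) CS C_def by auto
  have cc: "circ indep C" using j(3) by (simp add: circuit_circ)
  have nk: "\<not> restr indep S (set (take (Suc k) \<sigma>))"
    unfolding restr_def using m_her[OF m _ Csub] cc by (auto simp: circ_def)
  have cS: "circuit S (restr indep S) C" using CS C_def j(3)
    by (auto simp: circuit_def restr_def)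
  show ?thesis using fc_char[OF mS ik nk cS Csub] unfolding \<sigma>_def C_def .
qed



definition idx :: "'a list \<Rightarrow> 'a \<Rightarrow> nat" where
  "idx xs x = (THE i. i < length xs \<and> xs ! i = x)"

lemma idx_nth: "distinct xs \<Longrightarrow> i < length xs \<Longrightarrow> idx xs (xs ! i) = i"
  unfolding idx_def by (rule the_equality) (auto simp: nth_eq_iff_index_eq)

definition relab :: "'a list \<Rightarrow> 'a list \<Rightarrow> 'a \<Rightarrow> 'a" where
  "relab a b x = (if x \<in> set a then b ! idx a x else x)"

definition fib :: "'a set \<Rightarrow> 'a set \<Rightarrow> 'a list \<Rightarrow> 'a list set" where
  "fib E S \<sigma> = {\<pi> \<in> permutations_of_set E. filter (\<lambda>x. x \<in> S) \<pi> = \<sigma>}"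

lemma relab_props:
  assumes a: "a \<in> permutations_of_set S" and b: "b \<in> permutations_of_set S"
  shows "relab b a (relab a b x) = x" and "relab a b x \<in> S \<longleftrightarrow> x \<in> S"
    and "map (relab a b) a = b"
proof -
  have sa: "set a = S" "distinct a" and sb: "set b = S" "distinct b"
    using a b by (auto simp: permutations_of_set_def)
  have la: "length a = length b" using sa sb distinct_card by metis
  have key: "\<And>i. i < length a \<Longrightarrow> relab a b (a ! i) = b ! i"
    unfolding relab_def using idx_nth[OF sa(2)] by auto
  show "relab b a (relab a b x) = x"
  proof (cases "x \<in> S")
    case True
    then obtain i where i: "i < length a" "x = a ! i" using sa(1) by (metis in_set_conv_nth)
    have "relab a b x = b ! i" using key i by simp
    moreover have "relab b a (b ! i) = a ! i"
      unfolding relab_def using idx_nth[OF sb(2)] i la by auto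
    ultimately show ?thesis using i by simp
  next
    case False
    then show ?thesis using sa sb by (simp add: relab_def)
  qed
  show "relab a b x \<in> S \<longleftrightarrow> x \<in> S"
  proof (cases "x \<in> S")
    case True
    then obtain i where i: "i < length a" "x = a ! i" using sa(1) by (metis in_set_conv_nth)
    then show ?thesis using key[OF i(1)] la sb(1) True by auto
  next
    case False
    then show ?thesis using sa by (simp add: relab_def)
  qed
  show "map (relab a b) a = b"
    by (rule nth_equalityI) (simp_all add: la key)
qed

lemma fib_map:
  assumes a: "a \<in> permutations_of_set S" and b: "b \<in> permutations_of_set S"
    and SE: "S \<subseteq> E" and p: "\<pi> \<in> fib E S a"
  shows "map (relab a b) \<pi> \<in> fib E S b"
proof -
  let ?f = "relab a b" and ?g = "relab b a"
  have sp: "set \<pi> = E" "distinct \<pi>" and fp: "filter (\<lambda>x. x \<in> S) \<pi> = a"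
    using p by (auto simp: fib_def permutations_of_set_def)
  have inv: "\<And>x. ?g (?f x) = x" using relab_props(1)[OF a b] .
  have inv2: "\<And>x. ?f (?g x) = x" using relab_props(1)[OF b a] .
  have fE: "?f x \<in> E" if xE: "x \<in> E" for x
  proof (cases "x \<in> S")
    case True
    then show ?thesis using relab_props(2)[OF a b, of x] SE by blast
  next
    case False
    then have "x \<notin> set a" using a by (simp add: permutations_of_set_def)
    then show ?thesis by (simp add: relab_def xE)
  qed
  have gE: "?g x \<in> E" if xE: "x \<in> E" for x
  proof (cases "x \<in> S")
    case True
    then show ?thesis using relab_props(2)[OF b a, of x] SE by blast
  next
    case False
    then have "x \<notin> set b" using b by (simp add: permutations_of_set_def)
    then show ?thesis by (simp add: relab_def xE)
  qed
  have "distinct (map ?f \<pi>)"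
    using sp(2) inj_on_inverseI[of _ ?g ?f, OF inv] by (simp add: distinct_map)
  moreover have "set (map ?f \<pi>) = E"
  proof
    show "set (map ?f \<pi>) \<subseteq> E" using fE sp(1) by auto
    show "E \<subseteq> set (map ?f \<pi>)"
    proof
      fix x assume "x \<in> E"
      then have "?g x \<in> set \<pi>" using gE sp(1) by auto
      then show "x \<in> set (map ?f \<pi>)" using inv2[of x] by (metis image_eqI set_map)
    qed
  qed
  moreover have "filter (\<lambda>x. x \<in> S) (map ?f \<pi>) = b"
  proof -
    have "filter (\<lambda>x. x \<in> S) (map ?f \<pi>) = map ?f (filter ((\<lambda>x. x \<in> S) \<circ> ?f) \<pi>)"
      by (rule filter_map)
    also have "filter ((\<lambda>x. x \<in> S) \<circ> ?f) \<pi> = filter (\<lambda>x. x \<in> S) \<pi>"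
      using relab_props(2)[OF a b] by (intro filter_cong) auto
    finally show ?thesis using fp relab_props(3)[OF a b] by simp
  qed
  ultimately show ?thesis by (auto simp: fib_def permutations_of_set_def)
qed

lemma fib_card:
  assumes a: "a \<in> permutations_of_set S" and b: "b \<in> permutations_of_set S" and SE: "S \<subseteq> E"
  shows "card (fib E S a) = card (fib E S b)"
proof -
  have "bij_betw (map (relab a b)) (fib E S a) (fib E S b)"
  proof (rule bij_betw_byWitness[where f' = "map (relab b a)"])
    show "\<forall>x\<in>fib E S a. map (relab b a) (map (relab a b) x) = x"
      using relab_props(1)[OF a b] by (simp add: map_idI)
    show "\<forall>y\<in>fib E S b. map (relab a b) (map (relab b a) y) = y"
      using relab_props(1)[OF b a] by (simp add: map_idI)
    show "map (relab a b) ` fib E S a \<subseteq> fib E S b" using fib_map[OF a b SE] by blast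
    show "map (relab b a) ` fib E S b \<subseteq> fib E S a" using fib_map[OF b a SE] by blast
  qed
  then show ?thesis by (rule bij_betw_same_card)
qed

lemma count_fib:
  assumes fE: "finite E" and SE: "S \<subseteq> E" and A: "A \<subseteq> permutations_of_set S"
    and s0: "s0 \<in> permutations_of_set S"
  shows "card {\<pi> \<in> permutations_of_set E. filter (\<lambda>x. x \<in> S) \<pi> \<in> A} = card A * card (fib E S s0)"
proof -
  have eq: "{\<pi> \<in> permutations_of_set E. filter (\<lambda>x. x \<in> S) \<pi> \<in> A} = (\<Union>\<sigma>\<in>A. fib E S \<sigma>)"
    by (auto simp: fib_def)
  have fA: "finite A" using A finite_subset finite_permutations_of_set by blast
  have "card (\<Union>\<sigma>\<in>A. fib E S \<sigma>) = (\<Sum>\<sigma>\<in>A. card (fib E S \<sigma>))"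
    by (rule card_UN_disjoint) (auto simp: fA fib_def)
  also have "\<dots> = (\<Sum>\<sigma>\<in>A. card (fib E S s0))"
    using fib_card[OF _ s0 SE] A by (intro sum.cong) auto
  finally show ?thesis using eq by simp
qed

lemma prob_transfer:
  assumes fE: "finite E" and SE: "S \<subseteq> E" and A: "A \<subseteq> permutations_of_set S"
  shows "real (card {\<pi> \<in> permutations_of_set E. filter (\<lambda>x. x \<in> S) \<pi> \<in> A})
           / real (card (permutations_of_set E))
         = real (card A) / real (card (permutations_of_set S))"
proof -
  have fS: "finite S" using fE SE finite_subset by blast
  then obtain s0 where s0: "s0 \<in> permutations_of_set S"
    using permutations_of_set_empty_iff by blast
  have all: "permutations_of_set E = {\<pi> \<in> permutations_of_set E. filter (\<lambda>x. x \<in> S) \<pi> \<in> permutations_of_set S}"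
    using SE by (auto simp: permutations_of_set_def)
  have NE: "card (permutations_of_set E) = card (permutations_of_set S) * card (fib E S s0)"
    using count_fib[OF fE SE order_refl s0] all by simp
  have c1: "card {\<pi> \<in> permutations_of_set E. filter (\<lambda>x. x \<in> S) \<pi> \<in> A} = card A * card (fib E S s0)"
    using count_fib[OF fE SE A s0] .
  have pos: "card (permutations_of_set E) > 0" using fE by simp
  then have "card (fib E S s0) > 0" using NE by simp
  then show ?thesis unfolding c1 NE by (simp add: field_simps)
qed


theorem mainTheorem5:
  fixes E S T :: "'a set" and indep :: "'a set \<Rightarrow> bool"
  assumes "matroid E indep" and "\<not> indep E"
    and "S \<subseteq> E" and "\<not> indep S" and "T \<subseteq> S"
  shows "circ_mass E indep S - circ_mass E indep (S - T)
           = perm_prob E (\<lambda>\<pi>. first_circuit E indep \<pi> \<subseteq> S \<and> first_circuit E indep \<pi> \<inter> T \<noteq> {})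
       \<and> perm_prob E (\<lambda>\<pi>. first_circuit E indep \<pi> \<subseteq> S \<and> first_circuit E indep \<pi> \<inter> T \<noteq> {})
           \<le> hit_prob S (restr indep S) T"
proof
  note m = assms(1) and nE = assms(2) and SE = assms(3)
  have fE: "finite E" using m_fin[OF m] .
  let ?fc = "first_circuit E indep"
  let ?N = "real (card (permutations_of_set E))"
  define PS where "PS = {\<pi> \<in> permutations_of_set E. ?fc \<pi> \<subseteq> S}"
  define PQ where "PQ = {\<pi> \<in> permutations_of_set E. ?fc \<pi> \<subseteq> S - T}"
  define PR where "PR = {\<pi> \<in> permutations_of_set E. ?fc \<pi> \<subseteq> S \<and> ?fc \<pi> \<inter> T \<noteq> {}}"
  have un: "PS = PQ \<union> PR" unfolding PS_def PQ_def PR_def by blast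
  have dj: "PQ \<inter> PR = {}" unfolding PQ_def PR_def by blast
  have fin: "finite PQ" "finite PR" unfolding PQ_def PR_def by simp_all
  have cardS: "card PS = card PQ + card PR" using un dj fin card_Un_disjoint by metis
  show "circ_mass E indep S - circ_mass E indep (S - T)
           = perm_prob E (\<lambda>\<pi>. ?fc \<pi> \<subseteq> S \<and> ?fc \<pi> \<inter> T \<noteq> {})"
    unfolding circ_mass_def perm_prob_def PS_def[symmetric] PQ_def[symmetric] PR_def[symmetric] cardS
    by (simp add: diff_divide_distrib add_divide_distrib)
  define A where "A = {\<sigma> \<in> permutations_of_set S. first_circuit S (restr indep S) \<sigma> \<inter> T \<noteq> {}}"
  have Asub: "A \<subseteq> permutations_of_set S" unfolding A_def by blast
  have sub: "PR \<subseteq> {\<pi> \<in> permutations_of_set E. filter (\<lambda>x. x \<in> S) \<pi> \<in> A}"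
  proof
    fix \<pi> assume "\<pi> \<in> PR"
    then have p: "\<pi> \<in> permutations_of_set E" and c: "?fc \<pi> \<subseteq> S" "?fc \<pi> \<inter> T \<noteq> {}"
      unfolding PR_def by auto
    have "filter (\<lambda>x. x \<in> S) \<pi> \<in> permutations_of_set S"
      using p SE by (auto simp: permutations_of_set_def)
    moreover have "first_circuit S (restr indep S) (filter (\<lambda>x. x \<in> S) \<pi>) \<inter> T \<noteq> {}"
      using fc_S[OF m nE p SE c(1)] c(2) by simp
    ultimately show "\<pi> \<in> {\<pi> \<in> permutations_of_set E. filter (\<lambda>x. x \<in> S) \<pi> \<in> A}"
      using p unfolding A_def by blast
  qed
  have "card PR \<le> card {\<pi> \<in> permutations_of_set E. filter (\<lambda>x. x \<in> S) \<pi> \<in> A}"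
    by (rule card_mono[OF _ sub]) simp
  then have "real (card PR) / ?N \<le> real (card {\<pi> \<in> permutations_of_set E. filter (\<lambda>x. x \<in> S) \<pi> \<in> A}) / ?N"
    by (intro divide_right_mono) simp_all
  also have "\<dots> = real (card A) / real (card (permutations_of_set S))"
    by (rule prob_transfer[OF fE SE Asub])
  finally show "perm_prob E (\<lambda>\<pi>. ?fc \<pi> \<subseteq> S \<and> ?fc \<pi> \<inter> T \<noteq> {}) \<le> hit_prob S (restr indep S) T"
    unfolding perm_prob_def hit_prob_def PR_def[symmetric] A_def .
qed

end
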